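(* Let $\Sigma$ be a finite simplicial complex, let $d\ge0$, and suppose $\deg\tau>0$ for all $\tau\in\Sigma_d$. Then for every $p\ge1$, $$\frac{h(\Sigma_d)^p}{|\Sigma_{d+1}|^{p-1}}\le\lambda_{I_d}(\Delta^{up}_{d,p})\le\mathrm{vol}(\Sigma_d)^{p-1}\,h(\Sigma_d).$$
   Context: $B_{d+1}$ is the signed $\Sigma_d\times\Sigma_{d+1}$ incidence matrix of $\Sigma$, with entries $\mathrm{sgn}([\tau],\partial[\sigma])$ for $\tau\subset\sigma$ and $0$ otherwise. For $d\ge1$, $B_d$ is the analogous $\Sigma_{d-1}\times\Sigma_d$ matrix; for $d=0$, $B_0^\top:\mathbb{R}\to\mathbb{R}^{\Sigma_0}$ maps to the constant functions. $\deg\tau$ is the number of $(d+1)$-simplices containing $\tau$, and $\mathrm{vol}(\Sigma_d)=\sum_\tau\deg\tau$. We write $\|\mathbf{x}\|_{p,\deg}^p=\sum_\tau\deg\tau\,|x_\tau|^p$, and $I_d=\mathrm{rank}(B_d)+1$. The first nontrivial eigenvalue of the normalized up $p$-Laplacian is $$\lambda_{I_d}(\Delta^{up}_{d,p})=\min_{\mathbf{x}\ne0,\ \mathbf{x}\perp\mathrm{Im}(B_d^\top)}\frac{\|B_{d+1}^\top\mathbf{x}\|_p^p}{\min_{\mathbf{y}\in\mathrm{Im}(B_d^\top)}\|\mathbf{x}+\mathbf{y}\|_{p,\deg}^p},$$ where $\perp$ is standard Euclidean orthogonality. The Cheeger constant is $$h(\Sigma_d)=\inf_{\mathbf{x}\notin\mathrm{Im}(B_d^\top)}\frac{\|B_{d+1}^\top\mathbf{x}\|_1}{\inf_{\mathbf{z}\in\mathrm{Im}(B_d^\top)}\|\mathbf{x}+\mathbf{z}\|_{1,\deg}}.$$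 *)

theory Defs
  imports Complex_Main
begin

text \<open>A finite (abstract) simplicial complex on a linearly ordered vertex type:
  a finite family of nonempty finite vertex sets closed under nonempty subsets.
  Simplices are oriented by the vertex order.\<close>

definition simplicial_complex :: "'v::linorder set set \<Rightarrow> bool" where
  "simplicial_complex K \<longleftrightarrow> finite K \<and> (\<forall>\<sigma>\<in>K. finite \<sigma> \<and> \<sigma> \<noteq> {}) \<and>
     (\<forall>\<sigma>\<in>K. \<forall>\<tau>. \<tau> \<subseteq> \<sigma> \<and> \<tau> \<noteq> {} \<longrightarrow> \<tau> \<in> K)"

definition faces :: "'v::linorder set set \<Rightarrow> nat \<Rightarrow> 'v set set" where
  "faces K d = {\<sigma>\<in>K. card \<sigma> = d + 1}"

text \<open>sgn([\<tau>], \<partial>[\<sigma>]): for \<sigma> = {v_0 < ... < v_k} and \<tau> = \<sigma> - {v_i}, this is (-1)^i;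
  zero if \<tau> is not a facet of \<sigma>.\<close>
definition inc_sign :: "'v::linorder set \<Rightarrow> 'v set \<Rightarrow> real" where
  "inc_sign \<tau> \<sigma> = (if \<tau> \<subseteq> \<sigma> \<and> card \<sigma> = card \<tau> + 1
      then (-1) ^ card {v\<in>\<sigma>. v < the_elem (\<sigma> - \<tau>)} else 0)"

definition cochains :: "'v::linorder set set \<Rightarrow> nat \<Rightarrow> ('v set \<Rightarrow> real) set" where
  "cochains K d = {x. \<forall>\<tau>. \<tau> \<notin> faces K d \<longrightarrow> x \<tau> = 0}"

definition coboundary :: "'v::linorder set set \<Rightarrow> nat \<Rightarrow> ('v set \<Rightarrow> real) \<Rightarrow> ('v set \<Rightarrow> real)" where
  "coboundary K d x = (\<lambda>\<sigma>. if \<sigma> \<in> faces K (d+1)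
       then (\<Sum>\<tau>\<in>faces K d. inc_sign \<tau> \<sigma> * x \<tau>) else 0)"

definition im_BdT :: "'v::linorder set set \<Rightarrow> nat \<Rightarrow> ('v set \<Rightarrow> real) set" where
  "im_BdT K d = (if d = 0
      then {(\<lambda>\<tau>. if \<tau> \<in> faces K 0 then c else 0) | c. True}
      else {coboundary K (d - 1) y | y. y \<in> cochains K (d - 1)})"

definition deg :: "'v::linorder set set \<Rightarrow> nat \<Rightarrow> 'v set \<Rightarrow> nat" where
  "deg K d \<tau> = card {\<sigma>\<in>faces K (d+1). \<tau> \<subseteq> \<sigma>}"

definition vol :: "'v::linorder set set \<Rightarrow> nat \<Rightarrow> real" where
  "vol K d = (\<Sum>\<tau>\<in>faces K d. real (deg K d \<tau>))"

definition pnorm_pow :: "'v::linorder set set \<Rightarrow> nat \<Rightarrow> real \<Rightarrow> ('v set \<Rightarrow> real) \<Rightarrow> real" where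
  "pnorm_pow K k p x = (\<Sum>\<sigma>\<in>faces K k. \<bar>x \<sigma>\<bar> powr p)"

definition pnorm_deg_pow :: "'v::linorder set set \<Rightarrow> nat \<Rightarrow> real \<Rightarrow> ('v set \<Rightarrow> real) \<Rightarrow> real" where
  "pnorm_deg_pow K d p x = (\<Sum>\<tau>\<in>faces K d. real (deg K d \<tau>) * \<bar>x \<tau>\<bar> powr p)"

definition orth_im :: "'v::linorder set set \<Rightarrow> nat \<Rightarrow> ('v set \<Rightarrow> real) \<Rightarrow> bool" where
  "orth_im K d x \<longleftrightarrow> (\<forall>y\<in>im_BdT K d. (\<Sum>\<tau>\<in>faces K d. x \<tau> * y \<tau>) = 0)"

definition quot_norm_pow :: "'v::linorder set set \<Rightarrow> nat \<Rightarrow> real \<Rightarrow> ('v set \<Rightarrow> real) \<Rightarrow> real" where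
  "quot_norm_pow K d p x = Inf {pnorm_deg_pow K d p (\<lambda>\<tau>. x \<tau> + y \<tau>) | y. y \<in> im_BdT K d}"

text \<open>\<lambda>_{I_d}(\<Delta>^{up}_{d,p}), via the variational formula.\<close>
definition lambda_up :: "'v::linorder set set \<Rightarrow> nat \<Rightarrow> real \<Rightarrow> real" where
  "lambda_up K d p = Inf {pnorm_pow K (d+1) p (coboundary K d x) / quot_norm_pow K d p x
      | x. x \<in> cochains K d \<and> (\<exists>\<tau>\<in>faces K d. x \<tau> \<noteq> 0) \<and> orth_im K d x}"

definition cheeger :: "'v::linorder set set \<Rightarrow> nat \<Rightarrow> real" where
  "cheeger K d = Inf {pnorm_pow K (d+1) 1 (coboundary K d x) / quot_norm_pow K d 1 x
      | x. x \<in> cochains K d \<and> x \<notin> im_BdT K d}"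

end

theory Submission
  imports Defs "HOL-Analysis.Derivative"
begin

lemma powr_tangent:
  fixes s t p :: real
  assumes "p \<ge> 1" "s > 0" "t \<ge> 0"
  shows "s powr p + p * s powr (p-1) * (t - s) \<le> t powr p"
proof (cases "t = 0")
  case True
  have "s powr p = s * s powr (p-1)" using assms by (simp add: powr_mult_base)
  then have "s powr p + p * s powr (p-1) * (t - s) = (1 - p) * s powr p" using True by (simp add: algebra_simps)
  also have "\<dots> \<le> 0" using assms by (simp add: mult_nonpos_nonneg)
  finally show ?thesis using True by simp
next
  case False
  have "p * s powr (p-1) * (t - s) \<le> t powr p - s powr p"
    using assms False
    by (intro convex_on_imp_above_tangent[where A = "{0<..}", OF powr_convex[OF assms(1)]])
       (auto intro!: derivative_eq_intros simp: interior_open)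
  then show ?thesis by simp
qed

lemma power_mean_ineq:
  fixes w a :: "'a \<Rightarrow> real" and p :: real
  assumes "finite A" "p \<ge> 1" "\<And>i. i \<in> A \<Longrightarrow> w i \<ge> 0" "\<And>i. i \<in> A \<Longrightarrow> a i \<ge> 0"
    and W: "(\<Sum>i\<in>A. w i) > 0"
  shows "(\<Sum>i\<in>A. w i * a i) powr p \<le> (\<Sum>i\<in>A. w i) powr (p-1) * (\<Sum>i\<in>A. w i * a i powr p)"
proof -
  define S where "S = (\<Sum>i\<in>A. w i * a i)"
  define V where "V = (\<Sum>i\<in>A. w i)"
  have S0: "S \<ge> 0" unfolding S_def using assms by (intro sum_nonneg) auto
  have V0: "V > 0" using W V_def by simp
  show ?thesis
  proof (cases "S = 0")
    case True
    have "0 \<le> V powr (p-1) * (\<Sum>i\<in>A. w i * a i powr p)"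
      using assms by (intro mult_nonneg_nonneg sum_nonneg) auto
    then show ?thesis using True unfolding S_def V_def by simp
  next
    case False
    define m where "m = S / V"
    have m0: "m > 0" using S0 False V0 unfolding m_def by simp
    have "(\<Sum>i\<in>A. w i * (m powr p + p * m powr (p-1) * (a i - m))) \<le> (\<Sum>i\<in>A. w i * a i powr p)"
      using assms m0 by (intro sum_mono mult_left_mono powr_tangent) auto
    moreover have "(\<Sum>i\<in>A. w i * (m powr p + p * m powr (p-1) * (a i - m)))
        = V * m powr p + p * m powr (p-1) * (S - V * m)"
      unfolding S_def V_def by (simp add: algebra_simps sum.distrib sum_distrib_left sum_subtractf sum_distrib_right)
    moreover have "S - V * m = 0" using V0 unfolding m_def by simp
    ultimately have 1: "V * m powr p \<le> (\<Sum>i\<in>A. w i * a i powr p)" by simp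
    have "V powr p = V * V powr (p-1)" using V0 by (simp add: powr_mult_base)
    then have "V * m powr p = S powr p / V powr (p-1)"
      unfolding m_def using V0 S0 by (simp add: powr_divide field_simps)
    with 1 have "S powr p / V powr (p-1) \<le> (\<Sum>i\<in>A. w i * a i powr p)" by simp
    then show ?thesis using V0 unfolding S_def[symmetric] V_def[symmetric]
      by (simp add: divide_le_eq mult.commute)
  qed
qed

lemma superadd_ineq:
  fixes w a :: "'a \<Rightarrow> real" and p :: real
  assumes "finite A" "p \<ge> 1" "\<And>i. i \<in> A \<Longrightarrow> w i \<ge> 1" "\<And>i. i \<in> A \<Longrightarrow> a i \<ge> 0"
  shows "(\<Sum>i\<in>A. w i * a i powr p) \<le> (\<Sum>i\<in>A. w i * a i) powr p"
proof -
  define S where "S = (\<Sum>i\<in>A. w i * a i)"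
  have nn: "0 \<le> w j * a j" if "j\<in>A" for j
  proof -
    have "0 \<le> w j" using assms(3)[OF that] by linarith
    then show ?thesis using assms(4)[OF that] by simp
  qed
  have S0: "S \<ge> 0" unfolding S_def using nn by (simp add: sum_nonneg)
  have le: "a i \<le> S" if "i \<in> A" for i
  proof -
    have 1: "a i \<le> w i * a i" using assms(3,4)[OF that] mult_right_mono[of 1 "w i" "a i"] by simp
    have "w i * a i \<le> S" unfolding S_def using assms(1) that nn
      by (intro member_le_sum) auto
    with 1 show ?thesis by linarith
  qed
  have "(\<Sum>i\<in>A. w i * a i powr p) \<le> (\<Sum>i\<in>A. w i * a i * S powr (p-1))"
  proof (intro sum_mono)
    fix i assume i: "i \<in> A"
    have ai: "a i \<ge> 0" using assms(4)[OF i] .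
    have "a i powr p = a i * a i powr (p-1)"
    proof (cases "a i = 0")
      case False
      then show ?thesis using ai by (simp add: powr_mult_base)
    qed simp
    also have "\<dots> \<le> a i * S powr (p-1)"
      using assms(2) ai le[OF i] by (intro mult_left_mono powr_mono2) auto
    finally have 2: "a i powr p \<le> a i * S powr (p-1)" .
    have "0 \<le> w i" using assms(3)[OF i] by linarith
    from mult_left_mono[OF 2 this] show "w i * a i powr p \<le> w i * a i * S powr (p-1)"
      by (simp only: mult.assoc)
  qed
  also have "\<dots> = S * S powr (p-1)" unfolding S_def by (simp add: sum_distrib_right)
  also have "\<dots> = S powr p"
  proof (cases "S = 0")
    case False
    then have "S > 0" using S0 by simp
    then show ?thesis by (simp add: powr_mult_base)
  qed simp
  finally show ?thesis unfolding S_def .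
qed

lemma inc_sign_nz:
  assumes "inc_sign \<tau> \<sigma> \<noteq> 0"
  shows "\<tau> \<subseteq> \<sigma> \<and> card \<sigma> = card \<tau> + 1"
  using assms unfolding inc_sign_def by (auto split: if_splits)

lemma inc_sign_remove:
  assumes "finite \<sigma>" "b \<in> \<sigma>"
  shows "inc_sign (\<sigma> - {b}) \<sigma> = (-1) ^ card {v\<in>\<sigma>. v < b}"
proof -
  have "\<sigma> - (\<sigma> - {b}) = {b}" using assms by auto
  moreover have "card \<sigma> = card (\<sigma> - {b}) + 1"
  proof -
    have "card \<sigma> > 0" using assms by (auto simp: card_gt_0_iff)
    moreover have "card (\<sigma> - {b}) = card \<sigma> - 1" using assms by (simp add: card_Diff_singleton)
    ultimately show ?thesis by linarith
  qed
  ultimately show ?thesis unfolding inc_sign_def by auto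
qed

lemma faces_finite: "\<sigma> \<in> faces K k \<Longrightarrow> finite \<sigma>"
proof -
  assume "\<sigma> \<in> faces K k"
  then have "card \<sigma> = k + 1" unfolding faces_def by simp
  then show "finite \<sigma>" by (metis card.infinite add_is_0 one_neq_zero)
qed

lemma sc_closed:
  assumes "simplicial_complex K" "\<sigma> \<in> K" "\<tau> \<subseteq> \<sigma>" "\<tau> \<noteq> {}"
  shows "\<tau> \<in> K"
  using assms unfolding simplicial_complex_def by blast

lemma dd_inner:
  assumes sc: "simplicial_complex K" and s: "\<sigma> \<in> faces K (d+1)" and cr: "card \<rho> = d"
  shows "(\<Sum>\<tau>\<in>faces K d. inc_sign \<tau> \<sigma> * inc_sign \<rho> \<tau>) = 0"
proof (cases "\<rho> \<subseteq> \<sigma>")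
  case False
  show ?thesis
  proof (intro sum.neutral ballI)
    fix \<tau> assume "\<tau> \<in> faces K d"
    show "inc_sign \<tau> \<sigma> * inc_sign \<rho> \<tau> = 0"
    proof (rule ccontr)
      assume "inc_sign \<tau> \<sigma> * inc_sign \<rho> \<tau> \<noteq> 0"
      then have "\<tau> \<subseteq> \<sigma>" "\<rho> \<subseteq> \<tau>" using inc_sign_nz by auto
      with False show False by auto
    qed
  qed
next
  case True
  have fs: "finite \<sigma>" using faces_finite s by blast
  have cs: "card \<sigma> = d + 2" using s unfolding faces_def by auto
  have fr: "finite \<rho>" using True fs finite_subset by blast
  have "card (\<sigma> - \<rho>) = 2" using True fs fr cs cr by (simp add: card_Diff_subset)
  then obtain a b where ab0: "\<sigma> - \<rho> = {a, b}" "a \<noteq> b" by (auto simp: card_2_iff)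
  obtain a b where ab: "\<sigma> - \<rho> = {a, b}" "a < b"
  proof (cases "a < b")
    case True then show ?thesis using that ab0 by blast
  next
    case False then have "b < a" using ab0 by auto
    then show ?thesis using that[of b a] ab0 by (auto simp: insert_commute)
  qed
  have a\<sigma>: "a \<in> \<sigma>" "a \<notin> \<rho>" and b\<sigma>: "b \<in> \<sigma>" "b \<notin> \<rho>" using ab by auto
  define \<tau>a where "\<tau>a = \<sigma> - {a}"
  define \<tau>b where "\<tau>b = \<sigma> - {b}"
  have sK: "\<sigma> \<in> K" using s unfolding faces_def by auto
  have ca: "card \<tau>a = d + 1" unfolding \<tau>a_def using fs a\<sigma> cs by simp
  have cb: "card \<tau>b = d + 1" unfolding \<tau>b_def using fs b\<sigma> cs by simp
  have "\<tau>a \<noteq> {}" using ca by auto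
  moreover have "\<tau>a \<subseteq> \<sigma>" unfolding \<tau>a_def by blast
  ultimately have "\<tau>a \<in> K" using sc_closed[OF sc sK] by blast
  then have ta: "\<tau>a \<in> faces K d" using ca unfolding faces_def by simp
  have "\<tau>b \<noteq> {}" using cb by auto
  moreover have "\<tau>b \<subseteq> \<sigma>" unfolding \<tau>b_def by blast
  ultimately have "\<tau>b \<in> K" using sc_closed[OF sc sK] by blast
  then have tb: "\<tau>b \<in> faces K d" using cb unfolding faces_def by simp
  have "a \<in> \<tau>b" unfolding \<tau>b_def using a\<sigma> ab by simp
  moreover have "a \<notin> \<tau>a" unfolding \<tau>a_def by simp
  ultimately have neq: "\<tau>a \<noteq> \<tau>b" by blast
  have zero: "inc_sign \<tau> \<sigma> * inc_sign \<rho> \<tau> = 0" if "\<tau> \<in> faces K d - {\<tau>a, \<tau>b}" for \<tau>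
  proof (rule ccontr)
    assume "inc_sign \<tau> \<sigma> * inc_sign \<rho> \<tau> \<noteq> 0"
    then have 1: "\<tau> \<subseteq> \<sigma>" "card \<sigma> = card \<tau> + 1" "\<rho> \<subseteq> \<tau>" using inc_sign_nz by auto
    have ft: "finite \<tau>" using 1 fs finite_subset by blast
    have "card (\<sigma> - \<tau>) = 1" using 1 fs ft by (simp add: card_Diff_subset)
    then obtain c where c: "\<sigma> - \<tau> = {c}" by (auto simp: card_1_singleton_iff)
    then have "c \<in> {a, b}" using ab 1 by blast
    moreover have "\<tau> = \<sigma> - {c}" using c 1 by blast
    ultimately have "\<tau> \<in> {\<tau>a, \<tau>b}" unfolding \<tau>a_def \<tau>b_def by auto
    with that show False by auto
  qed
  have "(\<Sum>\<tau>\<in>faces K d. inc_sign \<tau> \<sigma> * inc_sign \<rho> \<tau>) = (\<Sum>\<tau>\<in>{\<tau>a, \<tau>b}. inc_sign \<tau> \<sigma> * inc_sign \<rho> \<tau>)"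
  proof (rule sum.mono_neutral_right)
    show "finite (faces K d)" using sc unfolding simplicial_complex_def faces_def by auto
  qed (use ta tb zero in auto)
  also have "\<dots> = inc_sign \<tau>a \<sigma> * inc_sign \<rho> \<tau>a + inc_sign \<tau>b \<sigma> * inc_sign \<rho> \<tau>b"
    using neq by simp
  also have "\<dots> = 0"
  proof -
    define A where "A = card {v\<in>\<sigma>. v < a}"
    define B where "B = card {v\<in>\<sigma>. v < b}"
    have 1: "inc_sign \<tau>a \<sigma> = (-1) ^ A" unfolding \<tau>a_def A_def using inc_sign_remove fs a\<sigma> by blast
    have 2: "inc_sign \<tau>b \<sigma> = (-1) ^ B" unfolding \<tau>b_def B_def using inc_sign_remove fs b\<sigma> by blast
    have ea: "\<tau>a - {b} = \<rho>" unfolding \<tau>a_def using ab True by auto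
    have eb: "\<tau>b - {a} = \<rho>" unfolding \<tau>b_def using ab True by auto
    have fa: "finite \<tau>a" "b \<in> \<tau>a" unfolding \<tau>a_def using fs b\<sigma> ab by auto
    have fb: "finite \<tau>b" "a \<in> \<tau>b" unfolding \<tau>b_def using fs a\<sigma> ab by auto
    have "inc_sign \<rho> \<tau>a = (-1) ^ card {v\<in>\<tau>a. v < b}" using inc_sign_remove[OF fa] ea by simp
    also have "{v\<in>\<tau>a. v < b} = {v\<in>\<sigma>. v < b} - {a}" unfolding \<tau>a_def by auto
    also have "card \<dots> = B - 1" unfolding B_def using fs a\<sigma> ab by (simp add: card_Diff_singleton)
    finally have 3: "inc_sign \<rho> \<tau>a = (-1) ^ (B - 1)" .
    have "inc_sign \<rho> \<tau>b = (-1) ^ card {v\<in>\<tau>b. v < a}" using inc_sign_remove[OF fb] eb by simp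
    also have "{v\<in>\<tau>b. v < a} = {v\<in>\<sigma>. v < a}" unfolding \<tau>b_def using ab by auto
    finally have 4: "inc_sign \<rho> \<tau>b = (-1) ^ A" unfolding A_def .
    have "B > 0" unfolding B_def using fs a\<sigma> ab by (auto simp: card_gt_0_iff)
    then obtain B' where "B = Suc B'" using gr0_implies_Suc by blast
    then show ?thesis using 1 2 3 4 by (simp add: power_add[symmetric] add.commute)
  qed
  finally show ?thesis .
qed

lemma finite_faces: "simplicial_complex K \<Longrightarrow> finite (faces K k)"
  unfolding simplicial_complex_def faces_def by auto

lemma proj_exists:
  fixes g :: "'i \<Rightarrow> 'a \<Rightarrow> real" and x :: "'a \<Rightarrow> real"
  assumes "finite I" "finite A"
  shows "\<exists>c. \<forall>j\<in>I. (\<Sum>t\<in>A. (x t + (\<Sum>i\<in>I. c i * g i t)) * g j t) = 0"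
  using assms(1)
proof (induction I arbitrary: x rule: finite_induct)
  case empty
  then show ?case by simp
next
  case (insert j I)
  define ip :: "('a \<Rightarrow> real) \<Rightarrow> ('a \<Rightarrow> real) \<Rightarrow> real" where "ip = (\<lambda>u v. \<Sum>t\<in>A. u t * v t)"
  obtain cg where cg: "\<forall>i\<in>I. ip (\<lambda>t. g j t + (\<Sum>i\<in>I. cg i * g i t)) (g i) = 0"
    using insert.IH[of "g j"] unfolding ip_def by blast
  obtain cx where cx: "\<forall>i\<in>I. ip (\<lambda>t. x t + (\<Sum>i\<in>I. cx i * g i t)) (g i) = 0"
    using insert.IH[of x] unfolding ip_def by blast
  define g' where "g' = (\<lambda>t. g j t + (\<Sum>i\<in>I. cg i * g i t))"
  define x' where "x' = (\<lambda>t. x t + (\<Sum>i\<in>I. cx i * g i t))"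
  define a where "a = ip x' g' / ip g' g'"
  define c where "c = (\<lambda>i. if i = j then - a else cx i - a * cg i)"
  have jI: "j \<notin> I" using insert by simp
  have eq: "x t + (\<Sum>i\<in>insert j I. c i * g i t) = x' t - a * g' t" for t
  proof -
    have "(\<Sum>i\<in>insert j I. c i * g i t) = c j * g j t + (\<Sum>i\<in>I. c i * g i t)"
      using insert by simp
    also have "(\<Sum>i\<in>I. c i * g i t) = (\<Sum>i\<in>I. cx i * g i t - a * (cg i * g i t))"
      unfolding c_def using jI by (intro sum.cong) (auto simp: algebra_simps)
    finally show ?thesis unfolding x'_def g'_def c_def
      by (simp add: sum_subtractf sum_distrib_left algebra_simps)
  qed
  have x''_ip: "ip (\<lambda>t. x' t - a * g' t) v = ip x' v - a * ip g' v" for v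
    unfolding ip_def by (simp add: algebra_simps sum_subtractf sum_distrib_left)
  have orthI: "ip (\<lambda>t. x' t - a * g' t) (g i) = 0" if "i \<in> I" for i
    unfolding x''_ip using cx cg that unfolding x'_def g'_def by simp
  have orthg': "ip (\<lambda>t. x' t - a * g' t) g' = 0"
  proof (cases "ip g' g' = 0")
    case True
    have "\<forall>t\<in>A. g' t * g' t = 0"
      using True unfolding ip_def
      by (subst (asm) sum_nonneg_eq_0_iff) (auto simp: assms(2))
    then have "ip x' g' = 0" unfolding ip_def by (intro sum.neutral) auto
    then show ?thesis unfolding x''_ip using True by simp
  next
    case False
    then show ?thesis unfolding x''_ip by (simp add: a_def)
  qed
  have gj: "g j t = g' t - (\<Sum>i\<in>I. cg i * g i t)" for t unfolding g'_def by simp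
  have ipj: "ip u (g j) = ip u g' - (\<Sum>i\<in>I. cg i * ip u (g i))" for u
  proof -
    have "ip u (g j) = (\<Sum>t\<in>A. u t * g' t) - (\<Sum>t\<in>A. u t * (\<Sum>i\<in>I. cg i * g i t))"
      unfolding ip_def gj by (simp add: right_diff_distrib sum_subtractf)
    also have "(\<Sum>t\<in>A. u t * (\<Sum>i\<in>I. cg i * g i t)) = (\<Sum>t\<in>A. \<Sum>i\<in>I. cg i * (u t * g i t))"
      by (simp add: sum_distrib_left mult.left_commute)
    also have "\<dots> = (\<Sum>i\<in>I. \<Sum>t\<in>A. cg i * (u t * g i t))" by (rule sum.swap)
    also have "\<dots> = (\<Sum>i\<in>I. cg i * ip u (g i))" unfolding ip_def by (simp add: sum_distrib_left)
    finally show ?thesis unfolding ip_def by simp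
  qed
  have orthj: "ip (\<lambda>t. x' t - a * g' t) (g j) = 0"
    unfolding ipj using orthg' orthI by simp
  show ?case
  proof (intro exI[of _ c] ballI)
    fix i assume "i \<in> insert j I"
    then show "(\<Sum>t\<in>A. (x t + (\<Sum>i\<in>insert j I. c i * g i t)) * g i t) = 0"
      using orthI orthj unfolding eq ip_def by auto
  qed
qed

lemma im_gen:
  fixes K :: "'v::linorder set set"
  assumes sc: "simplicial_complex K"
  shows "\<exists>(I::'v::linorder set set) g. finite I \<and> (\<forall>i \<sigma>. \<sigma> \<notin> faces K d \<longrightarrow> g i \<sigma> = 0) \<and>
           im_BdT K d = {(\<lambda>\<sigma>. \<Sum>i\<in>I. c i * g i \<sigma>) | c. True}"
proof (cases d)
  case 0
  define g :: "'v set \<Rightarrow> 'v set \<Rightarrow> real" where "g = (\<lambda>_ \<sigma>. if \<sigma> \<in> faces K 0 then 1 else 0)"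
  have "im_BdT K d = {(\<lambda>\<sigma>. \<Sum>i\<in>{{}}. c i * g i \<sigma>) | c. True}"
  proof (intro set_eqI iffI)
    fix f assume "f \<in> im_BdT K d"
    then obtain c0 where "f = (\<lambda>\<tau>. if \<tau> \<in> faces K 0 then c0 else 0)" using 0 unfolding im_BdT_def by auto
    then show "f \<in> {(\<lambda>\<sigma>. \<Sum>i\<in>{{}}. c i * g i \<sigma>) | c. True}"
      by (intro CollectI exI[of _ "\<lambda>_. c0"]) (auto simp: g_def)
  next
    fix f assume "f \<in> {(\<lambda>\<sigma>. \<Sum>i\<in>{{}}. c i * g i \<sigma>) | c. True}"
    then obtain c where "f = (\<lambda>\<sigma>. \<Sum>i\<in>{{}}. c i * g i \<sigma>)" by auto
    then show "f \<in> im_BdT K d" using 0 unfolding im_BdT_def g_def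
      by (auto intro!: exI[of _ "c {}"])
  qed
  then show ?thesis using 0 by (intro exI[of _ "{{}}"] exI[of _ g]) (auto simp: g_def)
next
  case (Suc d')
  define g :: "'v set \<Rightarrow> 'v set \<Rightarrow> real" where "g = (\<lambda>\<rho> \<sigma>. if \<sigma> \<in> faces K d then inc_sign \<rho> \<sigma> else 0)"
  have cob: "coboundary K d' z = (\<lambda>\<sigma>. \<Sum>i\<in>faces K d'. z i * g i \<sigma>)" for z
    unfolding coboundary_def g_def using Suc by (auto simp: mult.commute intro!: ext)
  have "im_BdT K d = {(\<lambda>\<sigma>. \<Sum>i\<in>faces K d'. c i * g i \<sigma>) | c. True}"
  proof (intro set_eqI iffI)
    fix f assume "f \<in> im_BdT K d"
    then obtain z where "f = coboundary K d' z" using Suc unfolding im_BdT_def by auto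
    then show "f \<in> {(\<lambda>\<sigma>. \<Sum>i\<in>faces K d'. c i * g i \<sigma>) | c. True}" using cob by auto
  next
    fix f assume "f \<in> {(\<lambda>\<sigma>. \<Sum>i\<in>faces K d'. c i * g i \<sigma>) | c. True}"
    then obtain c where f: "f = (\<lambda>\<sigma>. \<Sum>i\<in>faces K d'. c i * g i \<sigma>)" by auto
    define z where "z = (\<lambda>\<rho>. if \<rho> \<in> faces K d' then c \<rho> else 0)"
    have "z \<in> cochains K d'" unfolding z_def cochains_def by auto
    moreover have "f = coboundary K d' z" unfolding cob f z_def by (intro ext sum.cong) auto
    ultimately show "f \<in> im_BdT K d" using Suc unfolding im_BdT_def by auto
  qed
  then show ?thesis using sc by (intro exI[of _ "faces K d'"] exI[of _ g]) (auto simp: g_def finite_faces)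
qed

lemma dd0:
  assumes sc: "simplicial_complex K" and y: "y \<in> im_BdT K d"
  shows "coboundary K d y \<sigma> = 0"
proof (cases "\<sigma> \<in> faces K (d+1)")
  case False then show ?thesis unfolding coboundary_def by simp
next
  case s: True
  show ?thesis
  proof (cases d)
    case 0
    then obtain c where yc: "y = (\<lambda>\<tau>. if \<tau> \<in> faces K 0 then c else 0)" using y unfolding im_BdT_def by auto
    have one: "inc_sign {} \<tau> = 1" if "\<tau> \<in> faces K 0" for \<tau>
    proof -
      from that have "card \<tau> = 1" unfolding faces_def by simp
      then obtain v where tv: "\<tau> = {v}" by (rule card_1_singletonE)
      have e: "{va. va = v \<and> va < v} = {}" by auto
      show ?thesis unfolding inc_sign_def tv by (simp add: e)
    qed
    have "coboundary K d y \<sigma> = c * (\<Sum>\<tau>\<in>faces K 0. inc_sign \<tau> \<sigma> * inc_sign {} \<tau>)"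
      unfolding coboundary_def using s 0 yc one by (simp add: sum_distrib_left mult.commute)
    also have "\<dots> = 0" using dd_inner[OF sc, of \<sigma> 0 "{}"] s 0 by simp
    finally show ?thesis .
  next
    case (Suc d')
    then obtain z where yz: "y = coboundary K d' z" using y unfolding im_BdT_def by auto
    have "coboundary K d y \<sigma> = (\<Sum>\<tau>\<in>faces K d. inc_sign \<tau> \<sigma> * (\<Sum>\<rho>\<in>faces K d'. inc_sign \<rho> \<tau> * z \<rho>))"
      unfolding coboundary_def yz using s Suc by simp
    also have "\<dots> = (\<Sum>\<rho>\<in>faces K d'. z \<rho> * (\<Sum>\<tau>\<in>faces K d. inc_sign \<tau> \<sigma> * inc_sign \<rho> \<tau>))"
      by (simp add: sum_distrib_left sum.swap[of _ "faces K d"] algebra_simps)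
    also have "\<dots> = 0"
    proof (intro sum.neutral ballI)
      fix \<rho> assume "\<rho> \<in> faces K d'"
      then have "card \<rho> = d" using Suc unfolding faces_def by simp
      then show "z \<rho> * (\<Sum>\<tau>\<in>faces K d. inc_sign \<tau> \<sigma> * inc_sign \<rho> \<tau>) = 0"
        using dd_inner[OF sc s] by simp
    qed
    finally show ?thesis .
  qed
qed

lemma cob_add: "coboundary K d (\<lambda>t. x t + y t) \<sigma> = coboundary K d x \<sigma> + coboundary K d y \<sigma>"
  unfolding coboundary_def by (simp add: algebra_simps sum.distrib)

lemma cob_shift:
  assumes "simplicial_complex K" "y \<in> im_BdT K d"
  shows "coboundary K d (\<lambda>t. x t + y t) = coboundary K d x"
  by (intro ext) (simp add: cob_add dd0[OF assms])

lemma lower_arith: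
  fixes p Nn W h q1 qp a1 ap :: real
  assumes p: "p \<ge> 1" and Nn: "Nn \<ge> 1" and W: "W > 0" and h0: "h \<ge> 0"
    and nn: "q1 \<ge> 0" "qp \<ge> 0" "a1 \<ge> 0" "ap \<ge> 0"
    and h: "h \<le> a1 / q1" and c1: "qp \<le> q1 powr p" and c2: "q1 powr p \<le> W powr (p-1) * qp"
    and c3: "a1 powr p \<le> Nn powr (p-1) * ap"
  shows "h powr p / Nn powr (p-1) \<le> ap / qp"
proof (cases "q1 = 0")
  case True
  then have "h = 0" using h h0 by simp
  then show ?thesis using nn by simp
next
  case False
  then have q1: "q1 > 0" using nn by simp
  have q1p: "q1 powr p > 0" using q1 by simp
  have Wp: "W powr (p-1) > 0" using W by simp
  have Np: "Nn powr (p-1) > 0" using Nn by simp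
  have qp: "qp > 0"
  proof (rule ccontr)
    assume "\<not> qp > 0" then have "qp = 0" using nn by simp
    then show False using c2 q1p by simp
  qed
  have "h * q1 \<le> a1" using h q1 by (simp add: le_divide_eq)
  then have "(h * q1) powr p \<le> a1 powr p" using h0 q1 p by (intro powr_mono2) auto
  then have 1: "h powr p * q1 powr p \<le> Nn powr (p-1) * ap" using c3 h0 q1 by (simp add: powr_mult)
  have 2: "h powr p / Nn powr (p-1) \<le> ap / q1 powr p"
    using 1 Np q1p by (simp add: divide_le_eq le_divide_eq mult.commute)
  have 3: "ap / q1 powr p \<le> ap / qp" using nn qp c1 q1p by (intro divide_left_mono) (auto intro: mult_pos_pos)
  show ?thesis using 2 3 by linarith
qed

lemma upper_arith:
  fixes p W q1 qp a1 ap :: real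
  assumes p: "p \<ge> 1" and W: "W > 0"
    and nn: "q1 \<ge> 0" "qp \<ge> 0" "a1 \<ge> 0" "ap \<ge> 0"
    and a1: "a1 \<le> q1" and c1: "qp \<le> q1 powr p" and c2: "q1 powr p \<le> W powr (p-1) * qp"
    and c3: "ap \<le> a1 powr p"
  shows "ap / qp \<le> W powr (p-1) * (a1 / q1)"
proof (cases "q1 = 0")
  case True
  then have "qp = 0" using c1 nn by simp
  then show ?thesis using nn W by simp
next
  case False
  then have q1: "q1 > 0" using nn by simp
  have q1p: "q1 powr p > 0" using q1 by simp
  have Wp: "W powr (p-1) > 0" using W by simp
  have qp: "qp > 0"
  proof (rule ccontr)
    assume "\<not> qp > 0" then have "qp = 0" using nn by simp
    then show False using c2 q1p by simp
  qed
  define r where "r = a1 / q1"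
  have r0: "r \<ge> 0" "r \<le> 1" unfolding r_def using nn q1 a1 by auto
  have rp: "r powr p \<le> r"
  proof (cases "r = 0")
    case False then show ?thesis using r0 p by (intro powr_le_one_le) auto
  qed simp
  have "ap / qp \<le> a1 powr p / qp" using c3 qp by (simp add: divide_right_mono)
  also have "\<dots> \<le> a1 powr p / (q1 powr p / W powr (p-1))"
  proof (rule divide_left_mono)
    show "q1 powr p / W powr (p - 1) \<le> qp" using c2 Wp by (simp add: divide_le_eq mult.commute)
  qed (use q1p Wp nn qp in \<open>auto intro: mult_pos_pos divide_pos_pos\<close>)
  also have "\<dots> = W powr (p-1) * r powr p" unfolding r_def using q1 nn by (simp add: powr_divide)
  also have "\<dots> \<le> W powr (p-1) * r" using rp Wp by simp
  finally show ?thesis unfolding r_def .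
qed

context
  fixes K :: "'v::linorder set set" and d :: nat
  assumes sc: "simplicial_complex K"
begin

lemma im_zero: "(\<lambda>_. 0) \<in> im_BdT K d"
proof -
  obtain I :: "'v set set" and g where Ig: "finite I" "im_BdT K d = {(\<lambda>\<sigma>. \<Sum>i\<in>I. c i * g i \<sigma>) | c. True}"
    using im_gen[OF sc, of d] by blast
  show ?thesis unfolding Ig(2) by (intro CollectI exI[of _ "\<lambda>_. 0"]) simp
qed

lemma im_add: "y1 \<in> im_BdT K d \<Longrightarrow> y2 \<in> im_BdT K d \<Longrightarrow> (\<lambda>t. y1 t + y2 t) \<in> im_BdT K d"
proof -
  assume y: "y1 \<in> im_BdT K d" "y2 \<in> im_BdT K d"
  obtain I :: "'v set set" and g where Ig: "finite I" "im_BdT K d = {(\<lambda>\<sigma>. \<Sum>i\<in>I. c i * g i \<sigma>) | c. True}"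
    using im_gen[OF sc, of d] by blast
  obtain c1 c2 where "y1 = (\<lambda>\<sigma>. \<Sum>i\<in>I. c1 i * g i \<sigma>)" "y2 = (\<lambda>\<sigma>. \<Sum>i\<in>I. c2 i * g i \<sigma>)"
    using y unfolding Ig(2) by blast
  then show ?thesis unfolding Ig(2)
    by (intro CollectI exI[of _ "\<lambda>i. c1 i + c2 i"]) (simp add: sum.distrib algebra_simps)
qed

lemma im_neg: "y \<in> im_BdT K d \<Longrightarrow> (\<lambda>t. - y t) \<in> im_BdT K d"
proof -
  assume y: "y \<in> im_BdT K d"
  obtain I :: "'v set set" and g where Ig: "finite I" "im_BdT K d = {(\<lambda>\<sigma>. \<Sum>i\<in>I. c i * g i \<sigma>) | c. True}"
    using im_gen[OF sc, of d] by blast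
  obtain c1 where "y = (\<lambda>\<sigma>. \<Sum>i\<in>I. c1 i * g i \<sigma>)"
    using y unfolding Ig(2) by blast
  then show ?thesis unfolding Ig(2)
    by (intro CollectI exI[of _ "\<lambda>i. - c1 i"]) (simp add: sum_negf)
qed

lemma im_coch: "y \<in> im_BdT K d \<Longrightarrow> y \<in> cochains K d"
proof -
  assume y: "y \<in> im_BdT K d"
  obtain I :: "'v set set" and g where Ig: "finite I" "\<forall>i \<sigma>. \<sigma> \<notin> faces K d \<longrightarrow> g i \<sigma> = 0"
      "im_BdT K d = {(\<lambda>\<sigma>. \<Sum>i\<in>I. c i * g i \<sigma>) | c. True}"
    using im_gen[OF sc, of d] by blast
  obtain c1 where "y = (\<lambda>\<sigma>. \<Sum>i\<in>I. c1 i * g i \<sigma>)"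
    using y unfolding Ig(3) by blast
  then show ?thesis unfolding cochains_def using Ig(2) by simp
qed

lemma im_proj: "\<exists>y\<in>im_BdT K d. orth_im K d (\<lambda>t. x t + y t)"
proof -
  obtain I :: "'v set set" and g where Ig: "finite I" "im_BdT K d = {(\<lambda>\<sigma>. \<Sum>i\<in>I. c i * g i \<sigma>) | c. True}"
    using im_gen[OF sc, of d] by blast
  obtain c where c: "\<forall>j\<in>I. (\<Sum>t\<in>faces K d. (x t + (\<Sum>i\<in>I. c i * g i t)) * g j t) = 0"
    using proj_exists[OF Ig(1) finite_faces[OF sc], of x g] by blast
  define y where "y = (\<lambda>t. \<Sum>i\<in>I. c i * g i t)"
  have "y \<in> im_BdT K d" unfolding Ig(2) y_def by (intro CollectI exI[of _ c]) simp
  moreover have "orth_im K d (\<lambda>t. x t + y t)"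
    unfolding orth_im_def
  proof
    fix z assume "z \<in> im_BdT K d"
    then obtain c' where z: "z = (\<lambda>\<sigma>. \<Sum>i\<in>I. c' i * g i \<sigma>)" unfolding Ig(2) by blast
    have "(\<Sum>\<tau>\<in>faces K d. (x \<tau> + y \<tau>) * z \<tau>)
        = (\<Sum>\<tau>\<in>faces K d. \<Sum>j\<in>I. c' j * ((x \<tau> + y \<tau>) * g j \<tau>))"
      unfolding z by (simp add: sum_distrib_left mult.left_commute)
    also have "\<dots> = (\<Sum>j\<in>I. c' j * (\<Sum>\<tau>\<in>faces K d. (x \<tau> + y \<tau>) * g j \<tau>))"
      by (subst sum.swap) (simp add: sum_distrib_left)
    also have "\<dots> = 0" using c unfolding y_def by simp
    finally show "(\<Sum>\<tau>\<in>faces K d. (x \<tau> + y \<tau>) * z \<tau>) = 0" .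
  qed
  ultimately show ?thesis by blast
qed

lemma Qset_ne: "{pnorm_deg_pow K d p (\<lambda>\<tau>. x \<tau> + y \<tau>) | y. y \<in> im_BdT K d} \<noteq> {}"
proof -
  have "pnorm_deg_pow K d p (\<lambda>\<tau>. x \<tau> + 0) \<in> {pnorm_deg_pow K d p (\<lambda>\<tau>. x \<tau> + y \<tau>) | y. y \<in> im_BdT K d}"
    unfolding mem_Collect_eq by (rule exI[of _ "\<lambda>_. 0"]) (simp add: im_zero)
  then show ?thesis by blast
qed

lemma pnd_nonneg: "0 \<le> pnorm_deg_pow K d p z"
  unfolding pnorm_deg_pow_def by (intro sum_nonneg mult_nonneg_nonneg) auto

lemma pn_nonneg: "0 \<le> pnorm_pow K k p z"
  unfolding pnorm_pow_def by (intro sum_nonneg) auto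

lemma Q_ge: "(\<And>y. y \<in> im_BdT K d \<Longrightarrow> L \<le> pnorm_deg_pow K d p (\<lambda>\<tau>. x \<tau> + y \<tau>)) \<Longrightarrow> L \<le> quot_norm_pow K d p x"
  unfolding quot_norm_pow_def by (rule cInf_greatest[OF Qset_ne]) auto

lemma Q_nonneg: "0 \<le> quot_norm_pow K d p x"
  by (rule Q_ge) (rule pnd_nonneg)

lemma Q_le: "y \<in> im_BdT K d \<Longrightarrow> quot_norm_pow K d p x \<le> pnorm_deg_pow K d p (\<lambda>\<tau>. x \<tau> + y \<tau>)"
  unfolding quot_norm_pow_def
  by (rule cInf_lower) (auto intro!: bdd_belowI[of _ 0] pnd_nonneg)

lemma Q_shift:
  assumes y0: "y0 \<in> im_BdT K d"
  shows "quot_norm_pow K d p (\<lambda>t. x t + y0 t) = quot_norm_pow K d p x"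
proof -
  have "{pnorm_deg_pow K d p (\<lambda>\<tau>. (x \<tau> + y0 \<tau>) + y \<tau>) | y. y \<in> im_BdT K d}
      = {pnorm_deg_pow K d p (\<lambda>\<tau>. x \<tau> + y \<tau>) | y. y \<in> im_BdT K d}"
  proof (intro set_eqI iffI)
    fix r assume "r \<in> {pnorm_deg_pow K d p (\<lambda>\<tau>. (x \<tau> + y0 \<tau>) + y \<tau>) | y. y \<in> im_BdT K d}"
    then obtain y where y: "y \<in> im_BdT K d" "r = pnorm_deg_pow K d p (\<lambda>\<tau>. (x \<tau> + y0 \<tau>) + y \<tau>)" by blast
    have 1: "(\<lambda>t. y0 t + y t) \<in> im_BdT K d" using im_add[OF y0 y(1)] .
    have 2: "r = pnorm_deg_pow K d p (\<lambda>\<tau>. x \<tau> + (y0 \<tau> + y \<tau>))" using y by (simp add: add.assoc)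
    show "r \<in> {pnorm_deg_pow K d p (\<lambda>\<tau>. x \<tau> + y \<tau>) | y. y \<in> im_BdT K d}"
      unfolding mem_Collect_eq by (rule exI[of _ "\<lambda>t. y0 t + y t"]) (use 1 2 in simp)
  next
    fix r assume "r \<in> {pnorm_deg_pow K d p (\<lambda>\<tau>. x \<tau> + y \<tau>) | y. y \<in> im_BdT K d}"
    then obtain y where y: "y \<in> im_BdT K d" "r = pnorm_deg_pow K d p (\<lambda>\<tau>. x \<tau> + y \<tau>)" by blast
    have 1: "(\<lambda>t. y t + - y0 t) \<in> im_BdT K d" using im_add[OF y(1) im_neg[OF y0]] .
    have 2: "r = pnorm_deg_pow K d p (\<lambda>\<tau>. (x \<tau> + y0 \<tau>) + (y \<tau> + - y0 \<tau>))" using y by simp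
    show "r \<in> {pnorm_deg_pow K d p (\<lambda>\<tau>. (x \<tau> + y0 \<tau>) + y \<tau>) | y. y \<in> im_BdT K d}"
      unfolding mem_Collect_eq by (rule exI[of _ "\<lambda>t. y t + - y0 t"]) (use 1 2 in simp)
  qed
  then show ?thesis unfolding quot_norm_pow_def by simp
qed

lemma pnd1: "pnorm_deg_pow K d 1 z = (\<Sum>\<tau>\<in>faces K d. real (deg K d \<tau>) * \<bar>z \<tau>\<bar>)"
  unfolding pnorm_deg_pow_def by simp

lemma pn1: "pnorm_pow K k 1 z = (\<Sum>\<sigma>\<in>faces K k. \<bar>z \<sigma>\<bar>)"
  unfolding pnorm_pow_def by simp

end

lemma Q_compare1:
  fixes K :: "'v::linorder set set"
  assumes sc: "simplicial_complex K" and p: "p \<ge> 1"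
    and dg: "\<forall>\<tau>\<in>faces K d. deg K d \<tau> > 0"
  shows "quot_norm_pow K d p x \<le> quot_norm_pow K d 1 x powr p"
proof -
  let ?Qp = "quot_norm_pow K d p x"
  have Qp0: "?Qp \<ge> 0" using Q_nonneg[OF sc] .
  have "?Qp powr (1/p) \<le> quot_norm_pow K d 1 x"
  proof (rule Q_ge[OF sc])
    fix y assume y: "y \<in> im_BdT K d"
    let ?N1 = "pnorm_deg_pow K d 1 (\<lambda>\<tau>. x \<tau> + y \<tau>)"
    have N10: "?N1 \<ge> 0" using pnd_nonneg[OF sc] .
    have "?Qp \<le> pnorm_deg_pow K d p (\<lambda>\<tau>. x \<tau> + y \<tau>)" using Q_le[OF sc y] .
    also have "\<dots> \<le> ?N1 powr p"
      unfolding pnorm_deg_pow_def powr_one' abs_abs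
      using p dg finite_faces[OF sc]
      by (intro superadd_ineq[where A="faces K d" and w="\<lambda>\<tau>. real (deg K d \<tau>)" and a="\<lambda>\<tau>. \<bar>x \<tau> + y \<tau>\<bar>", simplified]) auto
    finally have "?Qp powr (1/p) \<le> (?N1 powr p) powr (1/p)"
      using Qp0 p by (intro powr_mono2) auto
    also have "\<dots> = ?N1" using p N10 by (simp add: powr_powr)
    finally show "?Qp powr (1/p) \<le> ?N1" .
  qed
  then have "(?Qp powr (1/p)) powr p \<le> quot_norm_pow K d 1 x powr p"
    using p by (intro powr_mono2) auto
  also have "(?Qp powr (1/p)) powr p = ?Qp" using p Qp0 by (simp add: powr_powr)
  finally show ?thesis .
qed

lemma Q_compare2:
  fixes K :: "'v::linorder set set"
  assumes sc: "simplicial_complex K" and p: "p \<ge> 1"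
    and dg: "\<forall>\<tau>\<in>faces K d. deg K d \<tau> > 0" and vol: "vol K d > 0"
  shows "quot_norm_pow K d 1 x powr p \<le> vol K d powr (p-1) * quot_norm_pow K d p x"
proof -
  let ?Q1 = "quot_norm_pow K d 1 x"
  have Q10: "?Q1 \<ge> 0" using Q_nonneg[OF sc] .
  have Vp: "vol K d powr (p-1) > 0" using vol by simp
  have "?Q1 powr p / vol K d powr (p-1) \<le> quot_norm_pow K d p x"
  proof (rule Q_ge[OF sc])
    fix y assume y: "y \<in> im_BdT K d"
    let ?N1 = "pnorm_deg_pow K d 1 (\<lambda>\<tau>. x \<tau> + y \<tau>)"
    have "?Q1 powr p \<le> ?N1 powr p" using Q_le[OF sc y] Q10 p by (intro powr_mono2) auto
    also have "\<dots> \<le> vol K d powr (p-1) * pnorm_deg_pow K d p (\<lambda>\<tau>. x \<tau> + y \<tau>)"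
      unfolding pnorm_deg_pow_def powr_one' abs_abs
      using p dg finite_faces[OF sc] vol unfolding vol_def
      by (intro power_mean_ineq[where A="faces K d" and w="\<lambda>\<tau>. real (deg K d \<tau>)" and a="\<lambda>\<tau>. \<bar>x \<tau> + y \<tau>\<bar>", simplified]) auto
    finally show "?Q1 powr p / vol K d powr (p-1) \<le> pnorm_deg_pow K d p (\<lambda>\<tau>. x \<tau> + y \<tau>)"
      using Vp by (simp add: divide_le_eq mult.commute)
  qed
  then show ?thesis using Vp by (simp add: divide_le_eq mult.commute)
qed

lemma inc_abs: "\<bar>inc_sign \<tau> \<sigma>\<bar> \<le> (if \<tau> \<subseteq> \<sigma> then 1 else 0)"
  unfolding inc_sign_def by (auto simp: power_abs)

lemma delta_le:
  fixes K :: "'v::linorder set set"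
  assumes sc: "simplicial_complex K"
  shows "(\<Sum>\<sigma>\<in>faces K (d+1). \<bar>coboundary K d z \<sigma>\<bar>) \<le> (\<Sum>\<tau>\<in>faces K d. real (deg K d \<tau>) * \<bar>z \<tau>\<bar>)"
proof -
  have fF: "finite (faces K d)" and fG: "finite (faces K (d+1))" using finite_faces[OF sc] by auto
  have "(\<Sum>\<sigma>\<in>faces K (d+1). \<bar>coboundary K d z \<sigma>\<bar>)
      \<le> (\<Sum>\<sigma>\<in>faces K (d+1). \<Sum>\<tau>\<in>faces K d. (if \<tau> \<subseteq> \<sigma> then \<bar>z \<tau>\<bar> else 0))"
  proof (rule sum_mono)
    fix \<sigma> assume s: "\<sigma> \<in> faces K (d+1)"
    have "\<bar>coboundary K d z \<sigma>\<bar> = \<bar>\<Sum>\<tau>\<in>faces K d. inc_sign \<tau> \<sigma> * z \<tau>\<bar>"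
      unfolding coboundary_def using s by simp
    also have "\<dots> \<le> (\<Sum>\<tau>\<in>faces K d. \<bar>inc_sign \<tau> \<sigma> * z \<tau>\<bar>)" by (rule sum_abs)
    also have "\<dots> \<le> (\<Sum>\<tau>\<in>faces K d. (if \<tau> \<subseteq> \<sigma> then \<bar>z \<tau>\<bar> else 0))"
    proof (rule sum_mono)
      fix \<tau>
      show "\<bar>inc_sign \<tau> \<sigma> * z \<tau>\<bar> \<le> (if \<tau> \<subseteq> \<sigma> then \<bar>z \<tau>\<bar> else 0)"
      proof (cases "\<tau> \<subseteq> \<sigma>")
        case True
        then have "\<bar>inc_sign \<tau> \<sigma>\<bar> \<le> 1" using inc_abs[of \<tau> \<sigma>] by simp
        then have "\<bar>inc_sign \<tau> \<sigma>\<bar> * \<bar>z \<tau>\<bar> \<le> 1 * \<bar>z \<tau>\<bar>" by (intro mult_right_mono) auto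
        then show ?thesis using True by (simp add: abs_mult)
      next
        case False
        then show ?thesis by (simp add: inc_sign_def)
      qed
    qed
    finally show "\<bar>coboundary K d z \<sigma>\<bar> \<le> (\<Sum>\<tau>\<in>faces K d. (if \<tau> \<subseteq> \<sigma> then \<bar>z \<tau>\<bar> else 0))" .
  qed
  also have "\<dots> = (\<Sum>\<tau>\<in>faces K d. \<Sum>\<sigma>\<in>faces K (d+1). (if \<tau> \<subseteq> \<sigma> then \<bar>z \<tau>\<bar> else 0))"
    by (rule sum.swap)
  also have "\<dots> = (\<Sum>\<tau>\<in>faces K d. real (deg K d \<tau>) * \<bar>z \<tau>\<bar>)"
  proof (rule sum.cong[OF refl])
    fix \<tau>
    have "(\<Sum>\<sigma>\<in>faces K (d+1). (if \<tau> \<subseteq> \<sigma> then \<bar>z \<tau>\<bar> else 0)) = (\<Sum>\<sigma>\<in>{\<sigma>\<in>faces K (d+1). \<tau> \<subseteq> \<sigma>}. \<bar>z \<tau>\<bar>)"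
      by (rule sum.inter_filter[symmetric, OF fG])
    also have "\<dots> = real (deg K d \<tau>) * \<bar>z \<tau>\<bar>" unfolding deg_def by simp
    finally show "(\<Sum>\<sigma>\<in>faces K (d+1). (if \<tau> \<subseteq> \<sigma> then \<bar>z \<tau>\<bar> else 0)) = real (deg K d \<tau>) * \<bar>z \<tau>\<bar>" .
  qed
  finally show ?thesis .
qed

theorem proposition3p2:
  fixes K :: "'v::linorder set set" and d :: nat and p :: real
  assumes "simplicial_complex K"
    and "faces K d \<noteq> {}"
    and "\<forall>\<tau>\<in>faces K d. deg K d \<tau> > 0"
    and "p \<ge> 1"
  shows "cheeger K d powr p / real (card (faces K (d+1))) powr (p - 1) \<le> lambda_up K d p
         \<and> lambda_up K d p \<le> vol K d powr (p - 1) * cheeger K d"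
proof -
  note sc = assms(1) and dg = assms(3) and p = assms(4)
  have fF: "finite (faces K d)" and fG: "finite (faces K (d+1))" using finite_faces[OF sc] by auto
  obtain \<tau>0 where t0: "\<tau>0 \<in> faces K d" using assms(2) by blast
  have "deg K d \<tau>0 > 0" using dg t0 by blast
  then have "{\<sigma>\<in>faces K (d+1). \<tau>0 \<subseteq> \<sigma>} \<noteq> {}" unfolding deg_def by (metis card.empty less_irrefl)
  then obtain \<sigma>0 where s0: "\<sigma>0 \<in> faces K (d+1)" "\<tau>0 \<subseteq> \<sigma>0" by blast
  have Npos: "real (card (faces K (d+1))) \<ge> 1"
  proof -
    have "card (faces K (d+1)) > 0" using s0 fG card_gt_0_iff by blast
    then show ?thesis by simp
  qed
  have volpos: "vol K d > 0" unfolding vol_def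
  proof -
    have "0 < real (deg K d \<tau>0)" using dg t0 by simp
    also have "\<dots> \<le> (\<Sum>\<tau>\<in>faces K d. real (deg K d \<tau>))"
      using fF t0 by (intro member_le_sum) auto
    finally show "0 < (\<Sum>\<tau>\<in>faces K d. real (deg K d \<tau>))" .
  qed
  define e where "e = (\<lambda>t. if t = \<tau>0 then 1 else (0::real))"
  have e_coch: "e \<in> cochains K d" unfolding e_def cochains_def using t0 by auto
  have e_notin: "e \<notin> im_BdT K d"
  proof
    assume "e \<in> im_BdT K d"
    then have z: "coboundary K d e \<sigma>0 = 0" using dd0[OF sc] by blast
    have "coboundary K d e \<sigma>0 = (\<Sum>\<tau>\<in>faces K d. if \<tau> = \<tau>0 then inc_sign \<tau> \<sigma>0 else 0)"
      unfolding coboundary_def using s0 by (simp add: e_def if_distrib cong: if_cong)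
    also have "\<dots> = inc_sign \<tau>0 \<sigma>0" using fF t0 by (simp add: sum.delta')
    finally have "inc_sign \<tau>0 \<sigma>0 = 0" using z by simp
    moreover have "card \<sigma>0 = card \<tau>0 + 1" using s0 t0 unfolding faces_def by simp
    ultimately show False using s0 unfolding inc_sign_def by simp
  qed
  have A1_le: "pnorm_pow K (d+1) 1 (coboundary K d x) \<le> quot_norm_pow K d 1 x" for x
  proof (rule Q_ge[OF sc])
    fix y assume y: "y \<in> im_BdT K d"
    have "pnorm_pow K (d+1) 1 (coboundary K d x) = pnorm_pow K (d+1) 1 (coboundary K d (\<lambda>t. x t + y t))"
      using cob_shift[OF sc y] by simp
    also have "\<dots> \<le> pnorm_deg_pow K d 1 (\<lambda>\<tau>. x \<tau> + y \<tau>)"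
      unfolding pn1[OF sc] pnd1[OF sc] by (rule delta_le[OF sc])
    finally show "pnorm_pow K (d+1) 1 (coboundary K d x) \<le> pnorm_deg_pow K d 1 (\<lambda>\<tau>. x \<tau> + y \<tau>)" .
  qed
  have Ap_le: "pnorm_pow K (d+1) p u \<le> pnorm_pow K (d+1) 1 u powr p" for u
    unfolding pnorm_pow_def powr_one' abs_abs
    using superadd_ineq[where A="faces K (d+1)" and w="\<lambda>_. 1" and a="\<lambda>\<sigma>. \<bar>u \<sigma>\<bar>" and p=p] fG p by simp
  have Ap_ge: "pnorm_pow K (d+1) 1 u powr p \<le> real (card (faces K (d+1))) powr (p-1) * pnorm_pow K (d+1) p u" for u
    unfolding pnorm_pow_def powr_one' abs_abs
    using power_mean_ineq[where A="faces K (d+1)" and w="\<lambda>_. 1" and a="\<lambda>\<sigma>. \<bar>u \<sigma>\<bar>" and p=p] fG p Npos by simp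
  define S where "S = {pnorm_pow K (d+1) p (coboundary K d x) / quot_norm_pow K d p x
      | x. x \<in> cochains K d \<and> (\<exists>\<tau>\<in>faces K d. x \<tau> \<noteq> 0) \<and> orth_im K d x}"
  define T where "T = {pnorm_pow K (d+1) 1 (coboundary K d x) / quot_norm_pow K d 1 x
      | x. x \<in> cochains K d \<and> x \<notin> im_BdT K d}"
  have lam: "lambda_up K d p = Inf S" unfolding lambda_up_def S_def ..
  have che: "cheeger K d = Inf T" unfolding cheeger_def T_def ..
  have S_nn: "\<forall>s\<in>S. 0 \<le> s" unfolding S_def using pn_nonneg[OF sc] Q_nonneg[OF sc] by auto
  have T_nn: "\<forall>s\<in>T. 0 \<le> s" unfolding T_def using pn_nonneg[OF sc] Q_nonneg[OF sc] by auto
  have bS: "bdd_below S" using S_nn by (intro bdd_belowI[of _ 0]) auto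
  have bT: "bdd_below T" using T_nn by (intro bdd_belowI[of _ 0]) auto
  have proj: "\<exists>y\<in>im_BdT K d. (\<lambda>t. x t + y t) \<in> cochains K d \<and> (\<exists>\<tau>\<in>faces K d. x \<tau> + y \<tau> \<noteq> 0)
        \<and> orth_im K d (\<lambda>t. x t + y t)"
    if x: "x \<in> cochains K d" "x \<notin> im_BdT K d" for x
  proof -
    obtain y where y: "y \<in> im_BdT K d" "orth_im K d (\<lambda>t. x t + y t)" using im_proj[OF sc] by blast
    have yc: "y \<in> cochains K d" using im_coch[OF sc y(1)] .
    have c: "(\<lambda>t. x t + y t) \<in> cochains K d" using x(1) yc unfolding cochains_def by simp
    have nz: "\<exists>\<tau>\<in>faces K d. x \<tau> + y \<tau> \<noteq> 0"
    proof (rule ccontr)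
      assume "\<not> ?thesis"
      then have all0: "\<forall>\<tau>\<in>faces K d. x \<tau> + y \<tau> = 0" by blast
      have "x = (\<lambda>t. - y t)"
      proof
        fix t show "x t = - y t"
        proof (cases "t \<in> faces K d")
          case True then show ?thesis using all0 by (simp add: eq_neg_iff_add_eq_0)
        next
          case False then show ?thesis using x(1) yc unfolding cochains_def by simp
        qed
      qed
      then have "x \<in> im_BdT K d" using im_neg[OF sc y(1)] by simp
      with x(2) show False by simp
    qed
    show ?thesis using y c nz by blast
  qed
  have "pnorm_pow K (d+1) 1 (coboundary K d e) / quot_norm_pow K d 1 e \<in> T"
    unfolding T_def by (rule CollectI, rule exI[of _ e]) (simp add: e_coch e_notin)
  then have T_ne: "T \<noteq> {}" by blast
  have S_ne: "S \<noteq> {}"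
  proof -
    obtain y where "y \<in> im_BdT K d" "(\<lambda>t. e t + y t) \<in> cochains K d" "\<exists>\<tau>\<in>faces K d. e \<tau> + y \<tau> \<noteq> 0"
        "orth_im K d (\<lambda>t. e t + y t)" using proj[OF e_coch e_notin] by blast
    then have "pnorm_pow K (d+1) p (coboundary K d (\<lambda>t. e t + y t)) / quot_norm_pow K d p (\<lambda>t. e t + y t) \<in> S"
      unfolding S_def by (intro CollectI exI[of _ "\<lambda>t. e t + y t"]) simp
    then show ?thesis by blast
  qed
  have h0: "0 \<le> cheeger K d" unfolding che using T_ne T_nn by (intro cInf_greatest) auto
  have lower: "cheeger K d powr p / real (card (faces K (d+1))) powr (p - 1) \<le> lambda_up K d p"
    unfolding lam
  proof (rule cInf_greatest[OF S_ne])
    fix s assume "s \<in> S"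
    then obtain x where x: "s = pnorm_pow K (d+1) p (coboundary K d x) / quot_norm_pow K d p x"
      "x \<in> cochains K d" "\<exists>\<tau>\<in>faces K d. x \<tau> \<noteq> 0" "orth_im K d x" unfolding S_def by blast
    have xn: "x \<notin> im_BdT K d"
    proof
      assume "x \<in> im_BdT K d"
      then have "(\<Sum>\<tau>\<in>faces K d. x \<tau> * x \<tau>) = 0" using x(4) unfolding orth_im_def by blast
      then have "\<forall>\<tau>\<in>faces K d. x \<tau> * x \<tau> = 0" using fF by (subst (asm) sum_nonneg_eq_0_iff) auto
      then show False using x(3) by auto
    qed
    have "pnorm_pow K (d+1) 1 (coboundary K d x) / quot_norm_pow K d 1 x \<in> T"
      unfolding T_def by (rule CollectI, rule exI[of _ x]) (simp add: x(2) xn)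
    then have hle: "cheeger K d \<le> pnorm_pow K (d+1) 1 (coboundary K d x) / quot_norm_pow K d 1 x"
      unfolding che using bT by (intro cInf_lower) auto
    show "cheeger K d powr p / real (card (faces K (d+1))) powr (p - 1) \<le> s"
      unfolding x(1)
      by (rule lower_arith[OF p Npos volpos h0 Q_nonneg[OF sc] Q_nonneg[OF sc] pn_nonneg[OF sc] pn_nonneg[OF sc]
            hle Q_compare1[OF sc p dg] Q_compare2[OF sc p dg volpos] Ap_ge])
  qed
  have Wp: "vol K d powr (p-1) > 0" using volpos by simp
  have "lambda_up K d p / vol K d powr (p-1) \<le> cheeger K d"
    unfolding che
  proof (rule cInf_greatest[OF T_ne])
    fix t assume "t \<in> T"
    then obtain x where x: "t = pnorm_pow K (d+1) 1 (coboundary K d x) / quot_norm_pow K d 1 x"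
      "x \<in> cochains K d" "x \<notin> im_BdT K d" unfolding T_def by blast
    obtain y where y: "y \<in> im_BdT K d" "(\<lambda>t. x t + y t) \<in> cochains K d" "\<exists>\<tau>\<in>faces K d. x \<tau> + y \<tau> \<noteq> 0"
        "orth_im K d (\<lambda>t. x t + y t)" using proj[OF x(2,3)] by blast
    have "pnorm_pow K (d+1) p (coboundary K d (\<lambda>t. x t + y t)) / quot_norm_pow K d p (\<lambda>t. x t + y t) \<in> S"
      unfolding S_def by (rule CollectI, rule exI[of _ "\<lambda>t. x t + y t"]) (simp add: y(2,3,4))
    then have "lambda_up K d p \<le> pnorm_pow K (d+1) p (coboundary K d (\<lambda>t. x t + y t)) / quot_norm_pow K d p (\<lambda>t. x t + y t)"
      unfolding lam using bS by (intro cInf_lower) auto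
    also have "\<dots> = pnorm_pow K (d+1) p (coboundary K d x) / quot_norm_pow K d p x"
      using cob_shift[OF sc y(1)] Q_shift[OF sc y(1)] by simp
    also have "\<dots> \<le> vol K d powr (p-1) * t"
      unfolding x(1)
      by (rule upper_arith[OF p volpos Q_nonneg[OF sc] Q_nonneg[OF sc] pn_nonneg[OF sc] pn_nonneg[OF sc]
            A1_le Q_compare1[OF sc p dg] Q_compare2[OF sc p dg volpos] Ap_le])
    finally show "lambda_up K d p / vol K d powr (p-1) \<le> t" using Wp by (simp add: divide_le_eq mult.commute)
  qed
  then have "lambda_up K d p \<le> vol K d powr (p - 1) * cheeger K d" using Wp by (simp add: divide_le_eq mult.commute)
  with lower show ?thesis by blast
qed

end
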